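(* Every Bernstein set $B\subseteq\mathbb R^2$ is a $2$-I-covering.
   Context: A set $B\subseteq\mathbb R^2$ is a Bernstein set if for every uncountable Borel $Z\subseteq\mathbb R^2$ both $Z\cap B$ and $Z\setminus B$ are nonempty. A set $A\subseteq\mathbb R^2$ is a $2$-I-covering if for every $C\subseteq\mathbb R^2$ with $|C|=2$ there is an isometry $\phi$ of the Euclidean plane with $\phi[C]\subseteq A$. *)

theory Defs
  imports "HOL-Analysis.Analysis"
begin

definition bernstein_set :: "(real^2) set \<Rightarrow> bool" where
  "bernstein_set B \<longleftrightarrow>
     (\<forall>Z. Z \<in> sets borel \<and> uncountable Z \<longrightarrow> Z \<inter> B \<noteq> {} \<and> Z - B \<noteq> {})"

definition plane_isometry :: "(real^2 \<Rightarrow> real^2) \<Rightarrow> bool" where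
  "plane_isometry f \<longleftrightarrow> bij f \<and> (\<forall>x y. dist (f x) (f y) = dist x y)"

definition I_covering :: "nat \<Rightarrow> (real^2) set \<Rightarrow> bool" where
  "I_covering n A \<longleftrightarrow>
     (\<forall>C :: (real^2) set. finite C \<and> card C = n \<longrightarrow> (\<exists>\<phi>. plane_isometry \<phi> \<and> \<phi> ` C \<subseteq> A))"

end

theory Submission
  imports Defs
begin

theorem mainTheorem16:
  fixes B :: "(real^2) set"
  assumes "bernstein_set B"
  shows "I_covering 2 B"
  unfolding I_covering_def
proof (intro allI impI)
  fix C :: "(real^2) set"
  assume "finite C \<and> card C = 2"
  then obtain a b where C: "C = {a, b}" and ab: "a \<noteq> b"
    by (metis card_2_iff)
  have bB: "\<And>Z. Z \<in> sets borel \<Longrightarrow> uncountable Z \<Longrightarrow> Z \<inter> B \<noteq> {}"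
    using assms unfolding bernstein_set_def by blast
  have "uncountable (UNIV :: (real^2) set)"
    using uncountable_ball[of 1 "0::real^2"] countable_subset[of "ball (0::real^2) 1" UNIV] by auto
  then have "UNIV \<inter> B \<noteq> {}" using bB[of UNIV] by simp
  then obtain p where p: "p \<in> B" by blast
  define d where "d = dist a b"
  define S where "S = sphere p d"
  have "closed S" unfolding S_def by simp
  then have Sb: "S \<in> sets borel" by (simp add: borel_closed)
  have DIM: "2 \<le> DIM(real^2)" by simp
  have "connected S" unfolding S_def by (rule connected_sphere[OF DIM])
  moreover have "p + (b - a) \<in> S" "p - (b - a) \<in> S"
    unfolding S_def d_def by (auto simp: dist_norm norm_minus_commute)
  moreover have "p + (b - a) \<noteq> p - (b - a)"
  proof
    assume "p + (b - a) = p - (b - a)"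
    then have "(b - a) + (b - a) = 0" by (simp add: algebra_simps)
    then have "2 *\<^sub>R (b - a) = 0" by (simp add: scaleR_2)
    then have "b - a = 0" by simp
    then show False using ab by simp
  qed
  ultimately have "uncountable S" by (rule connected_uncountable)
  then have "S \<inter> B \<noteq> {}" using bB Sb by simp
  then obtain q where q: "q \<in> B" "q \<in> S" by blast
  have "norm (b - a) = norm (q - p)"
    using q(2) unfolding S_def d_def by (simp add: dist_norm norm_minus_commute)
  then obtain f where f: "orthogonal_transformation f" "f (b - a) = q - p"
    by (rule orthogonal_transformation_exists)
  define \<phi> where "\<phi> x = p + f (x - a)" for x
  have f0: "f 0 = 0" using f(1) orthogonal_transformation_isometry by blast
  have fd: "\<And>x y. dist (f x) (f y) = dist x y" using f(1) orthogonal_transformation_isometry by blast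
  have bf: "bij f" using f(1) orthogonal_transformation_bij by blast
  have "bij \<phi>"
  proof -
    have "\<phi> = (\<lambda>y. p + y) \<circ> f \<circ> (\<lambda>x. x - a)" unfolding \<phi>_def by auto
    moreover have "bij (\<lambda>y::real^2. p + y)"
      by (rule bij_betwI[where g="\<lambda>y. y - p"]) auto
    moreover have "bij (\<lambda>x::real^2. x - a)"
      by (rule bij_betwI[where g="\<lambda>y. y + a"]) auto
    ultimately show ?thesis using bf by (simp add: bij_comp)
  qed
  moreover have "\<forall>x y. dist (\<phi> x) (\<phi> y) = dist x y"
  proof (intro allI)
    fix x y
    have "dist (\<phi> x) (\<phi> y) = dist (f (x - a)) (f (y - a))"
      unfolding \<phi>_def by (rule dist_add_cancel)
    also have "\<dots> = dist (x - a) (y - a)" by (rule fd)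
    also have "\<dots> = dist x y" by (simp add: dist_norm)
    finally show "dist (\<phi> x) (\<phi> y) = dist x y" .
  qed
  moreover have "\<phi> ` C \<subseteq> B"
    using p q f f0 unfolding C \<phi>_def by auto
  ultimately show "\<exists>\<phi>. plane_isometry \<phi> \<and> \<phi> ` C \<subseteq> B"
    unfolding plane_isometry_def by blast
qed

end
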